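(* Let $\Sigma$ be a finite alphabet. For every unranked ordered $\Sigma$-labeled tree $t$ with $|t|\ge 2$, $\frac12|\mathrm{bdag}(t)| \le |\mathrm{dag}(t)| \le \frac12 |\mathrm{bdag}(t)|^2$.
   Context: An unranked tree over $\Sigma$ is a finite rooted tree with nodes labeled in $\Sigma$ and linearly ordered children; $|t|$ is its number of edges. $\mathrm{dag}(t)$ is the minimal dag of $t$: its nodes are the distinct subtrees of $t$, the node of a subtree $f(s_1,\dots,s_k)$ having $k$ ordered edges to the nodes of $s_1,\dots,s_k$; $|\mathrm{dag}(t)|$ is its number of edges. The first-child/next-sibling encoding $\mathrm{fcns}(t)$ is the binary tree (optional left and right child at each node) on the nodes of $t$ in which the left child of $u$ is the first child of $u$ in $t$ and the right child of $u$ is the next sibling of $u$ in $t$ (when these exist). $\mathrm{bdag}(t)$ is the minimal dag of $\mathrm{fcns}(t)$ (identical subtrees merged), and $|\mathrm{bdag}(t)|$ its number of edges, not counting edges to absent children. *)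

theory Defs
  imports Complex_Main "HOL-Library.Tree"
begin

datatype 'a utree = UNode 'a "'a utree list"

fun ulabel :: "'a utree \<Rightarrow> 'a" where
  "ulabel (UNode a ts) = a"

fun uchildren :: "'a utree \<Rightarrow> 'a utree list" where
  "uchildren (UNode a ts) = ts"

fun unodes :: "'a utree \<Rightarrow> nat" where
  "unodes (UNode a ts) = 1 + sum_list (map unodes ts)"

definition uedges :: "'a utree \<Rightarrow> nat" where
  "uedges t = unodes t - 1"

fun usubtrees :: "'a utree \<Rightarrow> 'a utree set" where
  "usubtrees (UNode a ts) = insert (UNode a ts) (\<Union>s\<in>set ts. usubtrees s)"

text \<open>Edges of the minimal dag: each distinct subtree f(s1..sk) contributes k edges.\<close>
definition dag_size :: "'a utree \<Rightarrow> nat" where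
  "dag_size t = (\<Sum>s\<in>usubtrees t. length (uchildren s))"

text \<open>First-child/next-sibling encoding of a forest (list of siblings)
  into a binary tree: left child = first child, right child = next sibling.\<close>
fun fcns_forest :: "'a utree list \<Rightarrow> 'a tree" where
  "fcns_forest [] = Leaf"
| "fcns_forest (UNode a ts # rest) = Node (fcns_forest ts) a (fcns_forest rest)"

definition fcns :: "'a utree \<Rightarrow> 'a tree" where
  "fcns t = fcns_forest [t]"

text \<open>Distinct (nonempty) subtrees of a binary tree = nodes of its minimal dag.\<close>
definition bsubtrees :: "'a tree \<Rightarrow> 'a tree set" where
  "bsubtrees b = subtrees b - {Leaf}"

text \<open>Edges of the minimal dag of a binary tree, not counting absent children.\<close>
fun present_children :: "'a tree \<Rightarrow> nat" where
  "present_children Leaf = 0"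
| "present_children (Node l a r) =
     (if l = Leaf then 0 else 1) + (if r = Leaf then 0 else 1)"

definition bdag_size :: "'a utree \<Rightarrow> nat" where
  "bdag_size t = (\<Sum>s\<in>bsubtrees (fcns t). present_children s)"

end

theory Submission
  imports Defs
begin

fun SF :: "'a utree list \<Rightarrow> 'a utree list set" where
  "SF [] = {}"
| "SF (UNode a cs # rest) = insert (UNode a cs # rest) (SF cs \<union> SF rest)"

lemma subtrees_fcns: "subtrees (fcns_forest ts) = insert Leaf (fcns_forest ` SF ts)"
  by (induction ts rule: SF.induct) auto

lemma SF_ne: "l \<in> SF ts \<Longrightarrow> l \<noteq> []"
  by (induction ts rule: SF.induct) auto

lemma fcns_Leaf: "fcns_forest xs = Leaf \<longleftrightarrow> xs = []"
  by (cases xs rule: fcns_forest.cases) auto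

lemma fcns_inj: "fcns_forest xs = fcns_forest ys \<Longrightarrow> xs = ys"
proof (induction xs arbitrary: ys rule: fcns_forest.induct)
  case 1 then show ?case using fcns_Leaf by metis
next
  case (2 a ts rest)
  then show ?case by (cases ys rule: fcns_forest.cases) auto
qed

lemma SF_char: "SF ts = {l. l \<noteq> [] \<and> ((\<exists>i. l = drop i ts) \<or> (\<exists>u\<in>set ts. \<exists>s\<in>usubtrees u. \<exists>i. l = drop i (uchildren s)))}"
proof (induction ts rule: SF.induct)
  case 1 then show ?case by simp
next
  case (2 a cs rest)
  show ?case
  proof (intro set_eqI iffI)
    fix l assume "l \<in> SF (UNode a cs # rest)"
    then consider "l = UNode a cs # rest" | "l \<in> SF cs" | "l \<in> SF rest" by auto
    then show "l \<in> {l. l \<noteq> [] \<and> ((\<exists>i. l = drop i (UNode a cs # rest)) \<or> (\<exists>u\<in>set (UNode a cs # rest). \<exists>s\<in>usubtrees u. \<exists>i. l = drop i (uchildren s)))}"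
    proof cases
      case 1 then show ?thesis by (metis (mono_tags, lifting) drop0 list.distinct(1) mem_Collect_eq)
    next
      case 2
      then show ?thesis using "2.IH"(1) by simp (metis uchildren.simps usubtrees.simps insertI1 UN_I insertI2)
    next
      case 3
      then show ?thesis using "2.IH"(2) by simp (metis drop_Suc_Cons)
    qed
  next
    fix l assume "l \<in> {l. l \<noteq> [] \<and> ((\<exists>i. l = drop i (UNode a cs # rest)) \<or> (\<exists>u\<in>set (UNode a cs # rest). \<exists>s\<in>usubtrees u. \<exists>i. l = drop i (uchildren s)))}"
    then have ne: "l \<noteq> []" and
      h: "(\<exists>i. l = drop i (UNode a cs # rest)) \<or> (\<exists>u\<in>set (UNode a cs # rest). \<exists>s\<in>usubtrees u. \<exists>i. l = drop i (uchildren s))" by auto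
    from h show "l \<in> SF (UNode a cs # rest)"
    proof
      assume "\<exists>i. l = drop i (UNode a cs # rest)"
      then obtain i where i: "l = drop i (UNode a cs # rest)" by blast
      show ?thesis
      proof (cases i)
        case 0 then show ?thesis using i by simp
      next
        case (Suc j) then show ?thesis using i ne "2.IH"(2) by auto
      qed
    next
      assume "\<exists>u\<in>set (UNode a cs # rest). \<exists>s\<in>usubtrees u. \<exists>i. l = drop i (uchildren s)"
      then obtain u s i where u: "u \<in> set (UNode a cs # rest)" and s: "s \<in> usubtrees u" and l: "l = drop i (uchildren s)" by blast
      show ?thesis
      proof (cases "u = UNode a cs")
        case True
        then have "s = UNode a cs \<or> (\<exists>v\<in>set cs. s \<in> usubtrees v)" using s by auto
        then show ?thesis using l ne "2.IH"(1) by auto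
      next
        case False
        then have "u \<in> set rest" using u by auto
        then have "\<exists>u\<in>set rest. \<exists>s\<in>usubtrees u. \<exists>i. l = drop i (uchildren s)" using s l by blast
        then have "l \<in> SF rest" unfolding "2.IH"(2) using ne by simp
        then show ?thesis by simp
      qed
    qed
  qed
qed

lemma SF1: "SF [t] = {l. l \<noteq> [] \<and> (l = [t] \<or> (\<exists>s\<in>usubtrees t. \<exists>i. l = drop i (uchildren s)))}"
  unfolding SF_char
proof (intro set_eqI iffI)
  fix l assume "l \<in> {l. l \<noteq> [] \<and> ((\<exists>i. l = drop i [t]) \<or> (\<exists>u\<in>set [t]. \<exists>s\<in>usubtrees u. \<exists>i. l = drop i (uchildren s)))}"
  then show "l \<in> {l. l \<noteq> [] \<and> (l = [t] \<or> (\<exists>s\<in>usubtrees t. \<exists>i. l = drop i (uchildren s)))}"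
    by (auto simp: drop_Cons' split: if_splits)
next
  fix l assume "l \<in> {l. l \<noteq> [] \<and> (l = [t] \<or> (\<exists>s\<in>usubtrees t. \<exists>i. l = drop i (uchildren s)))}"
  then show "l \<in> {l. l \<noteq> [] \<and> ((\<exists>i. l = drop i [t]) \<or> (\<exists>u\<in>set [t]. \<exists>s\<in>usubtrees u. \<exists>i. l = drop i (uchildren s)))}"
    by (auto intro: exI[of _ 0])
qed

definition pcl :: "'a utree list \<Rightarrow> nat" where
  "pcl l = (if uchildren (hd l) = [] then 0 else 1) + (if tl l = [] then 0 else 1)"

lemma bdag_sum: "bdag_size t = (\<Sum>l\<in>SF [t]. pcl l)"
proof -
  have B: "bsubtrees (fcns t) = fcns_forest ` SF [t]"
    unfolding bsubtrees_def fcns_def subtrees_fcns using SF_ne fcns_Leaf by fastforce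
  have inj: "inj_on fcns_forest (SF [t])" by (meson fcns_inj inj_onI)
  have "bdag_size t = (\<Sum>l\<in>SF [t]. present_children (fcns_forest l))"
    unfolding bdag_size_def B using sum.reindex[OF inj] by simp
  also have "\<dots> = (\<Sum>l\<in>SF [t]. pcl l)"
  proof (rule sum.cong[OF refl])
    fix l assume "l \<in> SF [t]"
    then obtain x rest where l: "l = x # rest" using SF_ne[of l "[t]"] by (cases l) auto
    obtain a cs where x: "x = UNode a cs" by (cases x)
    show "present_children (fcns_forest l) = pcl l"
      unfolding l x pcl_def by (simp add: fcns_Leaf)
  qed
  finally show ?thesis .
qed

lemma finite_usub: "finite (usubtrees t)"
  by (induction t) auto

lemma self_usub: "t \<in> usubtrees t"
  by (cases t) auto

lemma usub_parent: "s \<in> usubtrees t \<Longrightarrow> s = t \<or> (\<exists>s'\<in>usubtrees t. s \<in> set (uchildren s'))"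
proof (induction t)
  case (UNode a ts)
  show ?case
  proof (cases "s = UNode a ts")
    case False
    then obtain c where c: "c \<in> set ts" "s \<in> usubtrees c" using UNode.prems by auto
    from UNode.IH[OF c] have "s = c \<or> (\<exists>s'\<in>usubtrees c. s \<in> set (uchildren s'))" .
    then show ?thesis using c self_usub[of "UNode a ts"] by auto
  qed simp
qed

lemma child_smaller: "c \<in> set ts \<Longrightarrow> unodes c < unodes (UNode a ts)"
  using member_le_sum_list[of "unodes c" "map unodes ts"] by simp

lemma finite_SF: "finite (SF ts)"
  by (induction ts rule: SF.induct) auto

lemma card_filter_sum: "finite A \<Longrightarrow> card {x\<in>A. P x} = (\<Sum>x\<in>A. if P x then 1 else 0)"
  using sum.inter_filter[of A "\<lambda>_. (1::nat)" P] by simp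

theorem corollary1:
  fixes t :: "'a::finite utree"
  assumes "uedges t \<ge> 2"
  shows "real (bdag_size t) / 2 \<le> real (dag_size t) \<and>
         real (dag_size t) \<le> real (bdag_size t) ^ 2 / 2"
proof -
  define U where "U = usubtrees t"
  have finU: "finite U" unfolding U_def by (rule finite_usub)
  have tU: "t \<in> U" unfolding U_def by (rule self_usub)
  obtain a ts where t: "t = UNode a ts" by (cases t)
  have tsne: "ts \<noteq> []" using assms unfolding t uedges_def by auto
  define S where "S = SF [t]"
  have finS: "finite S" unfolding S_def by (rule finite_SF)
  define Ls where "Ls = {l\<in>S. uchildren (hd l) \<noteq> []}"
  define Rs where "Rs = {l\<in>S. tl l \<noteq> []}"
  define L where "L = card Ls"
  define R where "R = card Rs"
  define g where "g = (\<lambda>(s, i). drop i (uchildren (s::'a utree)))"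
  have dag: "dag_size t = (\<Sum>s\<in>U. length (uchildren s))" unfolding dag_size_def U_def ..
  have bdag: "bdag_size t = L + R"
  proof -
    have "bdag_size t = (\<Sum>l\<in>S. (if uchildren (hd l) \<noteq> [] then 1 else 0) + (if tl l \<noteq> [] then 1 else 0))"
      unfolding bdag_sum S_def pcl_def by (intro sum.cong) auto
    also have "\<dots> = L + R"
      unfolding sum.distrib L_def R_def Ls_def Rs_def using card_filter_sum[OF finS] by simp
    finally show ?thesis .
  qed
  have Sdesc: "S = {l. l \<noteq> [] \<and> (l = [t] \<or> (\<exists>s\<in>U. \<exists>i. l = drop i (uchildren s)))}"
    unfolding S_def U_def by (rule SF1)
  have "S \<subseteq> insert [t] (g ` (SIGMA s:U. {..<length (uchildren s)}))"
  proof
    fix l assume "l \<in> S"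
    then have ne: "l \<noteq> []" and h: "l = [t] \<or> (\<exists>s\<in>U. \<exists>i. l = drop i (uchildren s))" unfolding Sdesc by auto
    show "l \<in> insert [t] (g ` (SIGMA s:U. {..<length (uchildren s)}))"
    proof (cases "l = [t]")
      case False
      then obtain s i where "s \<in> U" "l = drop i (uchildren s)" using h by blast
      moreover then have "i < length (uchildren s)" using ne by auto
      ultimately show ?thesis unfolding g_def by force
    qed simp
  qed
  then have "card S \<le> card (insert [t] (g ` (SIGMA s:U. {..<length (uchildren s)})))"
    by (intro card_mono) (auto simp: finU)
  also have "\<dots> \<le> Suc (card (g ` (SIGMA s:U. {..<length (uchildren s)})))"
    by (rule card_insert_le_m1) auto
  also have "\<dots> \<le> Suc (card (SIGMA s:U. {..<length (uchildren s)}))"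
    by (simp only: Suc_le_mono) (rule card_image_le, simp add: finU)
  also have "\<dots> = Suc (dag_size t)" using finU dag by simp
  finally have cardS: "card S \<le> Suc (dag_size t)" .
  have LS: "L \<le> card S" unfolding L_def Ls_def using finS by (intro card_mono) auto
  have "Rs \<subseteq> g ` (SIGMA s:U. {..<length (uchildren s) - 1})"
  proof
    fix l assume "l \<in> Rs"
    then have ne: "tl l \<noteq> []" and "l \<in> S" unfolding Rs_def by auto
    then obtain s i where "s \<in> U" "l = drop i (uchildren s)" unfolding Sdesc by auto
    moreover then have "i < length (uchildren s) - 1" using ne by (simp add: drop_Suc[symmetric] tl_drop)
    ultimately show "l \<in> g ` (SIGMA s:U. {..<length (uchildren s) - 1})" unfolding g_def by force
  qed
  then have "R \<le> card (g ` (SIGMA s:U. {..<length (uchildren s) - 1}))"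
    unfolding R_def by (intro card_mono) (auto simp: finU)
  also have "\<dots> \<le> card (SIGMA s:U. {..<length (uchildren s) - 1})"
    by (rule card_image_le, simp add: finU)
  also have "\<dots> = (\<Sum>s\<in>U. length (uchildren s) - 1)" using finU by simp
  finally have Rle: "R \<le> (\<Sum>s\<in>U. length (uchildren s) - 1)" .
  have "(\<Sum>s\<in>U. length (uchildren s) - 1) + 1 \<le> dag_size t"
  proof -
    have "(\<Sum>s\<in>U. length (uchildren s) - 1) = (length ts - 1) + (\<Sum>s\<in>U-{t}. length (uchildren s) - 1)"
      using sum.remove[OF finU tU, of "\<lambda>s. length (uchildren s) - 1"] t by simp
    also have "(\<Sum>s\<in>U-{t}. length (uchildren s) - 1) \<le> (\<Sum>s\<in>U-{t}. length (uchildren s))"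
      by (intro sum_mono) auto
    finally have "(\<Sum>s\<in>U. length (uchildren s) - 1) + 1 \<le> length ts + (\<Sum>s\<in>U-{t}. length (uchildren s))"
      using tsne by (cases ts) auto
    also have "\<dots> = dag_size t" using sum.remove[OF finU tU, of "\<lambda>s. length (uchildren s)"] t dag by simp
    finally show ?thesis .
  qed
  with Rle have Rdag: "R + 1 \<le> dag_size t" by linarith
  have low: "L + R \<le> 2 * dag_size t" using cardS LS Rdag by linarith
  define N where "N = {s\<in>U. uchildren s \<noteq> []}"
  have finN: "finite N" unfolding N_def using finU by simp
  have NLs: "N \<subseteq> hd ` Ls"
  proof
    fix s assume "s \<in> N"
    then have sU: "s \<in> U" and sc: "uchildren s \<noteq> []" unfolding N_def by auto
    from sU have "s = t \<or> (\<exists>s'\<in>U. s \<in> set (uchildren s'))" unfolding U_def by (rule usub_parent)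
    then show "s \<in> hd ` Ls"
    proof
      assume "s = t"
      then have "[t] \<in> Ls" unfolding Ls_def Sdesc using sc by simp
      then show ?thesis using \<open>s = t\<close> by force
    next
      assume "\<exists>s'\<in>U. s \<in> set (uchildren s')"
      then obtain s' j where s': "s' \<in> U" "j < length (uchildren s')" "uchildren s' ! j = s"
        by (metis in_set_conv_nth)
      have "drop j (uchildren s') \<in> S" unfolding Sdesc using s' by auto
      moreover have "hd (drop j (uchildren s')) = s" using s' by (simp add: hd_drop_conv_nth)
      ultimately have "drop j (uchildren s') \<in> Ls" unfolding Ls_def using sc by auto
      then show ?thesis using \<open>hd (drop j (uchildren s')) = s\<close> by force
    qed
  qed
  have NL: "card N \<le> L"
  proof -
    have "card N \<le> card (hd ` Ls)" using NLs finS unfolding Ls_def by (intro card_mono) auto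
    also have "\<dots> \<le> L" unfolding L_def using finS Ls_def by (intro card_image_le) auto
    finally show ?thesis .
  qed
  have lenR: "length (uchildren s) \<le> R + 1" if sU: "s \<in> U" for s
  proof -
    let ?cs = "uchildren s"
    have "(\<lambda>i. drop i ?cs) ` {..<length ?cs - 1} \<subseteq> Rs"
      unfolding Rs_def Sdesc using sU by (auto simp: drop_Suc[symmetric] tl_drop)
    then have "card ((\<lambda>i. drop i ?cs) ` {..<length ?cs - 1}) \<le> R"
      unfolding R_def using finS Rs_def by (intro card_mono) auto
    moreover have "inj_on (\<lambda>i. drop i ?cs) {..<length ?cs - 1}"
      by (rule inj_onI) (metis length_drop lessThan_iff diff_diff_cancel less_imp_le_nat less_le_trans diff_le_self)
    ultimately show ?thesis using card_image by fastforce
  qed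
  have "dag_size t = (\<Sum>s\<in>N. length (uchildren s))"
    unfolding dag N_def using finU by (intro sum.mono_neutral_right) auto
  also have "\<dots> \<le> (\<Sum>s\<in>N. R + 1)" using lenR unfolding N_def by (intro sum_mono) auto
  also have "\<dots> = card N * (R + 1)" by simp
  also have "\<dots> \<le> L * (R + 1)" using NL by (rule mult_le_mono1)
  finally have up: "dag_size t \<le> L * (R + 1)" .
  have tN: "t \<in> N" unfolding N_def using tU tsne t by simp
  have L1: "L \<ge> 1" using NL card_mono[OF finN, of "{t}"] tN by auto
  have LR: "L \<ge> 2 \<or> R \<ge> 1"
  proof (cases "length ts \<ge> 2")
    case True then show ?thesis using lenR[OF tU] t by simp
  next
    case False
    then have "length ts = 1" using tsne by (cases ts) (auto simp: Suc_le_eq)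
    then obtain c where c: "ts = [c]" by (metis One_nat_def length_0_conv length_Suc_conv)
    have "unodes c \<ge> 2" using assms unfolding t c uedges_def by simp
    then have cc: "uchildren c \<noteq> []" by (cases c) auto
    have cU: "c \<in> U" unfolding U_def t c using self_usub[of c] by simp
    have "unodes c < unodes t" using child_smaller[of c ts a] c t by simp
    then have "c \<noteq> t" by auto
    then have "card {t, c} \<le> card N" using tN cU cc finN unfolding N_def by (intro card_mono) auto
    then show ?thesis using NL \<open>c \<noteq> t\<close> by simp
  qed
  have ar: "2 * (L * (R + 1)) \<le> (L + R)^2"
  proof -
    have "(L + R)^2 = L*L + 2*L*R + R*R" by (simp add: power2_eq_square algebra_simps)
    moreover have "2 * L \<le> L * L + R * R" using LR
    proof
      assume "L \<ge> 2" then have "2 * L \<le> L * L" using mult_le_mono1[of 2 L L] by simp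
      then show ?thesis by linarith
    next
      assume "R \<ge> 1" then have "1 \<le> R * R" by simp
      moreover have "2*L \<le> L*L + 1" using L1 by (cases L) auto
      ultimately show ?thesis by linarith
    qed
    ultimately show ?thesis by (simp add: algebra_simps)
  qed
  have "2 * dag_size t \<le> 2 * (L * (R + 1))" using up by simp
  then have "2 * dag_size t \<le> (bdag_size t)^2" using ar bdag by simp
  then have "real (2 * dag_size t) \<le> real ((bdag_size t)^2)" by linarith
  then have u2: "real (dag_size t) \<le> real (bdag_size t) ^ 2 / 2" by simp
  have "real (bdag_size t) \<le> real (2 * dag_size t)" using low bdag by linarith
  then have "real (bdag_size t) / 2 \<le> real (dag_size t)" by simp
  with u2 show ?thesis by blast
qed

end
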